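(* Let $L,K,\tau$ be positive integers, $K_{tot}=KL$, and index users by $u=(i,j)$, $i\in\{1,\dots,L\}$, $j\in\{1,\dots,K\}$. Let $\mathbf{q}_u\in\mathbb{R}^\tau$ be unit-norm pilot sequences and $\rho_{uv}=\mathbf{q}_u^T\mathbf{q}_v$. Let $P_u>0$ and $\delta_u>0$ for all users $u$, and define $$\overline{\phi}_u=\frac{P_u}{\delta_u\sum_{v}\rho_{uv}^2P_v/\delta_v-P_u},$$ where the sum is over all $K_{tot}$ users $v$, assuming each denominator is positive. Let $\gamma_u>0$ be SINR requirements such that $\overline{\phi}_u\ge\gamma_u$ for every user $u$. Then $$K_{tot}\le\sqrt{\tau\sum_{i=1}^L\sum_{j=1}^K\frac{1+\gamma_{i_j}}{\gamma_{i_j}}}.$$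
   Context: In the paper, $\overline{\phi}_u$ is the (lower bound on the) asymptotic downlink SINR of user $u$ in a multi-cell massive MIMO network with MRT precoding and least-squares channel estimation as the number of base-station antennas tends to infinity, $P_u$ is the downlink transmit power for user $u$, and $\delta_u$ is the normalization constant of its MRT precoder; $\gamma_{i_j}$ is the SINR requirement of user $j$ in cell $i$. The right-hand side is the paper's upper bound on the user load (number of simultaneously served users whose SINR requirements are met). *)

theory Defs
  imports "HOL-Analysis.Analysis"
begin

definition users :: "nat \<Rightarrow> nat \<Rightarrow> (nat \<times> nat) set" where
  "users L K = {1..L} \<times> {1..K}"

definition rho :: "(nat \<times> nat \<Rightarrow> real ^ 't) \<Rightarrow> nat \<times> nat \<Rightarrow> nat \<times> nat \<Rightarrow> real" where
  "rho q u v = q u \<bullet> q v"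

definition phibar :: "nat \<Rightarrow> nat \<Rightarrow> (nat \<times> nat \<Rightarrow> real ^ 't) \<Rightarrow> (nat \<times> nat \<Rightarrow> real)
    \<Rightarrow> (nat \<times> nat \<Rightarrow> real) \<Rightarrow> nat \<times> nat \<Rightarrow> real" where
  "phibar L K q P \<delta> u =
     P u / (\<delta> u * (\<Sum>v\<in>users L K. (rho q u v)\<^sup>2 * P v / \<delta> v) - P u)"

end

theory Submission
  imports Defs
begin

lemma swap4:
  fixes f :: "'a \<Rightarrow> 'a \<Rightarrow> 'b \<Rightarrow> 'b \<Rightarrow> real"
  shows "(\<Sum>u\<in>U. \<Sum>v\<in>U. \<Sum>i\<in>I. \<Sum>j\<in>I. f u v i j) = (\<Sum>i\<in>I. \<Sum>j\<in>I. \<Sum>u\<in>U. \<Sum>v\<in>U. f u v i j)"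
proof -
  have "(\<Sum>u\<in>U. \<Sum>v\<in>U. \<Sum>i\<in>I. \<Sum>j\<in>I. f u v i j) = (\<Sum>u\<in>U. \<Sum>i\<in>I. \<Sum>v\<in>U. \<Sum>j\<in>I. f u v i j)"
    by (rule sum.cong[OF refl], rule sum.swap)
  also have "\<dots> = (\<Sum>u\<in>U. \<Sum>i\<in>I. \<Sum>j\<in>I. \<Sum>v\<in>U. f u v i j)"
    by (rule sum.cong[OF refl], rule sum.cong[OF refl], rule sum.swap)
  also have "\<dots> = (\<Sum>i\<in>I. \<Sum>u\<in>U. \<Sum>j\<in>I. \<Sum>v\<in>U. f u v i j)"
    by (rule sum.swap)
  also have "\<dots> = (\<Sum>i\<in>I. \<Sum>j\<in>I. \<Sum>u\<in>U. \<Sum>v\<in>U. f u v i j)"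
    by (rule sum.cong[OF refl], rule sum.swap)
  finally show ?thesis .
qed

lemma frob:
  fixes q :: "'u \<Rightarrow> real ^ 't"
  shows "(\<Sum>u\<in>U. \<Sum>v\<in>U. (q u \<bullet> q v)\<^sup>2) = (\<Sum>i\<in>UNIV. \<Sum>j\<in>UNIV. (\<Sum>u\<in>U. q u $ i * q u $ j)\<^sup>2)"
proof -
  have "(\<Sum>u\<in>U. \<Sum>v\<in>U. (q u \<bullet> q v)\<^sup>2) = (\<Sum>u\<in>U. \<Sum>v\<in>U. \<Sum>i\<in>UNIV. \<Sum>j\<in>UNIV. (q u $ i * q u $ j) * (q v $ i * q v $ j))"
    by (simp add: inner_vec_def power2_eq_square sum_product mult_ac)
  also have "\<dots> = (\<Sum>i\<in>UNIV. \<Sum>j\<in>UNIV. \<Sum>u\<in>U. \<Sum>v\<in>U. (q u $ i * q u $ j) * (q v $ i * q v $ j))"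
    by (rule swap4)
  also have "\<dots> = (\<Sum>i\<in>UNIV. \<Sum>j\<in>UNIV. (\<Sum>u\<in>U. q u $ i * q u $ j)\<^sup>2)"
    by (simp add: power2_eq_square sum_product)
  finally show ?thesis .
qed

lemma ratio2: "(x::real) > 0 \<Longrightarrow> y > 0 \<Longrightarrow> x/y + y/x \<ge> 2"
proof -
  assume a: "x > 0" "y > 0"
  have "(x-y)^2 \<ge> 0" by simp
  hence "x*x + y*y \<ge> 2*x*y" by (simp add: power2_eq_square algebra_simps)
  thus ?thesis using a by (simp add: field_simps)
qed

theorem mainTheorem2:
  fixes L K :: nat
    and q :: "nat \<times> nat \<Rightarrow> real ^ 't"
    and P \<delta> \<gamma> :: "nat \<times> nat \<Rightarrow> real"
  assumes "L > 0" and "K > 0"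
    and unit: "\<forall>u\<in>users L K. norm (q u) = 1"
    and Ppos: "\<forall>u\<in>users L K. P u > 0"
    and dpos: "\<forall>u\<in>users L K. \<delta> u > 0"
    and denpos: "\<forall>u\<in>users L K.
        \<delta> u * (\<Sum>v\<in>users L K. (rho q u v)\<^sup>2 * P v / \<delta> v) - P u > 0"
    and gpos: "\<forall>u\<in>users L K. \<gamma> u > 0"
    and req: "\<forall>u\<in>users L K. phibar L K q P \<delta> u \<ge> \<gamma> u"
  shows "real (K * L) \<le>
    sqrt (real CARD('t) * (\<Sum>i=1..L. \<Sum>j=1..K. (1 + \<gamma> (i, j)) / \<gamma> (i, j)))"
proof -
  define U where "U = users L K"
  define w where "w u = P u / \<delta> u" for u
  define T where "T = (\<Sum>i=1..L. \<Sum>j=1..K. (1 + \<gamma> (i, j)) / \<gamma> (i, j))"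
  have finU: "finite U" by (simp add: U_def users_def)
  have cardU: "card U = K * L" by (simp add: U_def users_def card_cartesian_product)
  have wpos: "\<forall>u\<in>U. w u > 0" using Ppos dpos by (simp add: U_def w_def)
  have T_eq: "T = (\<Sum>u\<in>U. (1 + \<gamma> u) / \<gamma> u)"
    by (simp add: T_def U_def users_def sum.cartesian_product)
  have h1: "(\<Sum>v\<in>U. (rho q u v)\<^sup>2 * w v) / w u \<le> (1 + \<gamma> u) / \<gamma> u" if u: "u \<in> U" for u
  proof -
    define S where "S = (\<Sum>v\<in>U. (rho q u v)\<^sup>2 * P v / \<delta> v)"
    have S': "(\<Sum>v\<in>U. (rho q u v)\<^sup>2 * w v) = S" by (simp add: S_def w_def)
    have D: "\<delta> u * S - P u > 0" using denpos u by (simp add: U_def S_def)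
    have g: "\<gamma> u > 0" and p: "P u > 0" and d: "\<delta> u > 0" using gpos Ppos dpos u by (auto simp: U_def)
    have "\<gamma> u \<le> P u / (\<delta> u * S - P u)" using req u by (simp add: U_def S_def phibar_def)
    hence "\<gamma> u * (\<delta> u * S - P u) \<le> P u" using D by (simp add: pos_le_divide_eq)
    hence "\<gamma> u * (\<delta> u * S) \<le> (1 + \<gamma> u) * P u" by (simp add: algebra_simps)
    hence "S * \<delta> u / P u \<le> (1 + \<gamma> u) / \<gamma> u" using g p
      by (simp add: divide_simps mult_ac)
    thus ?thesis using S' p d by (simp add: w_def)
  qed
  define A where "A = (\<Sum>u\<in>U. \<Sum>v\<in>U. (rho q u v)\<^sup>2 * (w v / w u))"
  have A_le: "A \<le> T"
  proof -
    have "A = (\<Sum>u\<in>U. (\<Sum>v\<in>U. (rho q u v)\<^sup>2 * w v) / w u)"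
      by (simp add: A_def sum_divide_distrib)
    also have "\<dots> \<le> T" unfolding T_eq by (rule sum_mono, rule h1)
    finally show ?thesis .
  qed
  have A_swap: "A = (\<Sum>u\<in>U. \<Sum>v\<in>U. (rho q u v)\<^sup>2 * (w u / w v))"
    unfolding A_def by (subst sum.swap) (simp add: rho_def inner_commute)
  have A_ge: "(\<Sum>u\<in>U. \<Sum>v\<in>U. (rho q u v)\<^sup>2) \<le> A"
  proof -
    have "2 * (\<Sum>u\<in>U. \<Sum>v\<in>U. (rho q u v)\<^sup>2) = (\<Sum>u\<in>U. \<Sum>v\<in>U. (rho q u v)\<^sup>2 * 2)"
      by (simp add: sum_distrib_left mult_ac)
    also have "\<dots> \<le> (\<Sum>u\<in>U. \<Sum>v\<in>U. (rho q u v)\<^sup>2 * (w v / w u + w u / w v))"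
      using wpos by (intro sum_mono mult_left_mono ratio2) auto
    also have "\<dots> = A + A"
      by (subst (2) A_swap) (simp add: A_def distrib_left sum.distrib)
    finally show ?thesis by simp
  qed
  define M where "M i j = (\<Sum>u\<in>U. q u $ i * q u $ j)" for i j
  have F: "(\<Sum>u\<in>U. \<Sum>v\<in>U. (rho q u v)\<^sup>2) = (\<Sum>i\<in>UNIV. \<Sum>j\<in>UNIV. (M i j)\<^sup>2)"
    unfolding rho_def M_def by (rule frob)
  have diag: "(\<Sum>i\<in>UNIV. (M i i)\<^sup>2) \<le> (\<Sum>i\<in>UNIV. \<Sum>j\<in>UNIV. (M i j)\<^sup>2)"
    by (intro sum_mono member_le_sum) auto
  have tr: "(\<Sum>i\<in>UNIV. M i i) = real (K * L)"
  proof -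
    have "(\<Sum>i\<in>UNIV. M i i) = (\<Sum>u\<in>U. \<Sum>i\<in>UNIV. q u $ i * q u $ i)"
      unfolding M_def by (rule sum.swap)
    also have "\<dots> = (\<Sum>u\<in>U. (norm (q u))\<^sup>2)"
      by (simp add: power2_norm_eq_inner inner_vec_def)
    also have "\<dots> = (\<Sum>u\<in>U. 1)" using unit by (simp add: U_def)
    finally show ?thesis using cardU by simp
  qed
  have CS: "(real (K * L))\<^sup>2 \<le> (\<Sum>i\<in>UNIV. (M i i)\<^sup>2) * real CARD('t)"
    using sum_squared_le_sum_of_squares[of "\<lambda>i. M i i" UNIV] tr by simp
  have "(real (K * L))\<^sup>2 \<le> real CARD('t) * T"
  proof -
    have "(\<Sum>i\<in>UNIV. (M i i)\<^sup>2) \<le> T" using diag F A_ge A_le by linarith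
    hence "(\<Sum>i\<in>UNIV. (M i i)\<^sup>2) * real CARD('t) \<le> T * real CARD('t)"
      by (rule mult_right_mono) simp
    thus ?thesis using CS by (metis mult.commute order_trans)
  qed
  thus ?thesis unfolding T_def by (rule real_le_rsqrt)
qed

end
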